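(* For the merging problem with $n$ items and $k$ slots, suppose $2k\le n$ and the ad values $a_1,\dots,a_n$ are i.i.d. with a common (regular) distribution $G$ supported on $[0,\infty)$, and $o_i\ge 0$. Then the G-FIX mechanism is $\binom{n-k}{k}/\binom{n}{k}$-approximate: $\mathrm{OBJ}(\mathcal M^F)\ge \frac{\binom{n-k}{k}}{\binom{n}{k}}\mathrm{OBJ}(\mathcal M^* )$.
   Context: Merging problem: $n$ items indexed by $[n]$, $k\le n$ slots. Each item $i$ has a random ad value $a_i$, drawn independently from a regular distribution $G_i$ ($\boldsymbol a\sim G=\times_i G_i$), and a fixed organic value $o_i\ge0$. A mechanism is a pair of allocation rules $x,y$ with $x_i(\boldsymbol a),y_i(\boldsymbol a)\in\{0,1\}$ ($x_i=1$: item $i$ shown as ad; $y_i=1$: shown organically) satisfying for all $\boldsymbol a,i$: (i) $\sum_i(x_i+y_i)\le k$; (ii) $x_i+y_i\le 1$; (iii) $y_i(a_i,\boldsymbol a_{-i})$ independent of $a_i$; (iv) $x_i(a_i,\boldsymbol a_{-i})$ non-decreasing in $a_i$. Objective $\mathrm{OBJ}=\mathbb E_{\boldsymbol a\sim G}[\sum_i(a_ix_i(\boldsymbol a)+o_iy_i(\boldsymbol a))]$; $\mathcal M^*$ maximizes it subject to (i)–(iv). A mechanism $\mathcal M$ is $\tau$-approximate if $\mathrm{OBJ}(\mathcal M)/\mathrm{OBJ}(\mathcal M^* )\ge\tau$. Notation: for a finite multiset $S$ of reals and $k\le|S|$, $\max^{(k)}S$ is the sum of the $k$ largest elements of $S$.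 G-FIX-$I$ mechanism $\mathcal M^F_I$ for $I\subseteq[n]$: items in $I$ may only be shown in organic form and items outside $I$ only as ads; with $L=\{o_i:i\in I\}\cup\{a_i:i\in[n]\setminus I\}$, it displays (in the designated forms) the $k$ items with the largest values in $L$, i.e. $x_i(\boldsymbol a)=1$ iff $i\notin I$ and $a_i>\max^{(k+1)}L-\max^{(k)}L$, $y_i(\boldsymbol a)=1$ iff $i\in I$ and $o_i>\max^{(k+1)}L-\max^{(k)}L$. Its objective is $\mathrm{OBJ}(\mathcal M_I^F)=\mathbb E_{\boldsymbol a\sim G}[\max^{(k)}L]$. The G-FIX mechanism $\mathcal M^F$ runs the $\mathcal M^F_I$ with the highest objective among all $I\subseteq[n]$ with $|I|\le k$, so $\mathrm{OBJ}(\mathcal M^F)=\max_{I\subseteq[n],|I|\le k}\mathrm{OBJ}(\mathcal M^F_I)$. *)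

theory Defs
  imports "HOL-Probability.Probability" "HOL-Library.Multiset"
begin

(* Items are indexed by {..<n} (i.e. [n] shifted to 0-based). *)

definition profile_measure :: "nat \<Rightarrow> real measure \<Rightarrow> (nat \<Rightarrow> real) measure" where
  "profile_measure n G = PiM {..<n} (\<lambda>_. G)"

definition max_k :: "nat \<Rightarrow> real multiset \<Rightarrow> real" where
  "max_k k S = sum_list (take k (rev (sorted_list_of_multiset S)))"

definition regular_dist :: "real measure \<Rightarrow> bool" where
  "regular_dist G \<longleftrightarrow> prob_space G \<and>
     (\<exists>f S. f \<in> borel_measurable borel \<and> G = density lborel (\<lambda>v. ennreal (f v)) \<and>
        is_interval S \<and> S \<subseteq> {0..} \<and>
        (\<forall>v\<in>S. f v > 0) \<and> (\<forall>v. v \<notin> S \<longrightarrow> f v = 0) \<and>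
        mono_on S (\<lambda>v. v - (1 - measure G {..v}) / f v))"

(* Feasible mechanism (x, y): x a i = True iff item i is shown as an ad under profile a,
   y a i = True iff shown organically. Constraints (i)-(iv) hold for every profile a;
   in addition the allocation events are required to be measurable, so that the
   objective (an expectation) is meaningful. *)
definition feasible_mech ::
  "nat \<Rightarrow> nat \<Rightarrow> real measure \<Rightarrow> ((nat \<Rightarrow> real) \<Rightarrow> nat \<Rightarrow> bool) \<Rightarrow> ((nat \<Rightarrow> real) \<Rightarrow> nat \<Rightarrow> bool) \<Rightarrow> bool" where
  "feasible_mech n k G x y \<longleftrightarrow>
     (\<forall>a \<in> PiE {..<n} (\<lambda>_. UNIV).
        card {i\<in>{..<n}. x a i} + card {i\<in>{..<n}. y a i} \<le> k \<and>
        (\<forall>i<n. \<not> (x a i \<and> y a i)) \<and>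
        (\<forall>i<n. \<forall>t. y (a(i := t)) i = y a i) \<and>
        (\<forall>i<n. \<forall>t t'. t \<le> t' \<longrightarrow> x (a(i := t)) i \<longrightarrow> x (a(i := t')) i)) \<and>
     (\<forall>i<n. {a \<in> space (profile_measure n G). x a i} \<in> sets (profile_measure n G) \<and>
            {a \<in> space (profile_measure n G). y a i} \<in> sets (profile_measure n G))"

definition mech_obj ::
  "nat \<Rightarrow> real measure \<Rightarrow> (nat \<Rightarrow> real) \<Rightarrow> ((nat \<Rightarrow> real) \<Rightarrow> nat \<Rightarrow> bool) \<Rightarrow> ((nat \<Rightarrow> real) \<Rightarrow> nat \<Rightarrow> bool) \<Rightarrow> ennreal" where
  "mech_obj n G ov x y =
     (\<integral>\<^sup>+ a. ennreal (\<Sum>i<n. (if x a i then a i else 0) + (if y a i then ov i else 0))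
        \<partial>profile_measure n G)"

definition fix_obj :: "nat \<Rightarrow> nat \<Rightarrow> real measure \<Rightarrow> (nat \<Rightarrow> real) \<Rightarrow> nat set \<Rightarrow> ennreal" where
  "fix_obj n k G ov I =
     (\<integral>\<^sup>+ a. ennreal (max_k k (image_mset (\<lambda>i. if i \<in> I then ov i else a i) (mset_set {..<n})))
        \<partial>profile_measure n G)"

definition gfix_obj :: "nat \<Rightarrow> nat \<Rightarrow> real measure \<Rightarrow> (nat \<Rightarrow> real) \<Rightarrow> ennreal" where
  "gfix_obj n k G ov = Max (fix_obj n k G ov ` {I. I \<subseteq> {..<n} \<and> card I \<le> k})"

end

theory Submission imports Defs "HOL-Combinatorics.List_Permutation" begin

lemma top_sum_ge:
  fixes u :: "nat \<Rightarrow> real"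
  assumes anti: "\<And>j j'. j \<le> j' \<Longrightarrow> j' < N \<Longrightarrow> u j' \<le> u j"
  shows "S \<subseteq> {..<N} \<Longrightarrow> card S = k \<Longrightarrow> sum u S \<le> (\<Sum>j<k. u j)"
proof (induction k arbitrary: S)
  case 0
  then have "finite S" using finite_subset by blast
  with 0 show ?case by simp
next
  case (Suc k)
  have fin: "finite S" using Suc.prems finite_subset by blast
  have ne: "S \<noteq> {}" using Suc.prems by auto
  define m where "m = Max S"
  have mS: "m \<in> S" using fin ne m_def by simp
  have "S \<subseteq> {..m}" using fin m_def by (simp add: subset_iff)
  then have "card S \<le> card {..m}" by (intro card_mono) simp_all
  then have "Suc k \<le> card {..m}" using Suc.prems by simp
  then have km: "k \<le> m" by simp
  have mN: "m < N" using mS Suc.prems by auto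
  have c: "card (S - {m}) = k" using Suc.prems mS fin by simp
  have "sum u (S - {m}) \<le> (\<Sum>j<k. u j)" using Suc.IH[OF _ c] Suc.prems by blast
  moreover have "u m \<le> u k" using anti km mN by blast
  moreover have "sum u S = u m + sum u (S - {m})" using fin mS by (simp add: sum.remove)
  ultimately show ?case by simp
qed

lemma max_k_ge:
  fixes f :: "nat \<Rightarrow> real"
  assumes S: "S \<subseteq> {..<n}" "card S = k"
  shows "sum f S \<le> max_k k (image_mset f (mset_set {..<n}))"
proof -
  define xs where "xs = map f [0..<n]"
  define ys where "ys = rev (sort xs)"
  have im: "image_mset f (mset_set {..<n}) = mset xs"
    unfolding xs_def by (simp add: mset_map mset_upt atLeast0LessThan)
  have lys: "length ys = n" "length xs = n" unfolding ys_def xs_def by auto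
  have "mset xs = mset ys" unfolding ys_def by (simp only: mset_rev mset_sort)
  then obtain p where p: "bij_betw p {..<n} {..<n}" "\<forall>i<n. xs ! i = ys ! (p i)"
    using permutation_Ex_bij[of xs ys] lys by metis
  have injS: "inj_on p S" using p(1) S(1) bij_betw_imp_inj_on inj_on_subset by metis
  have "sum f S = (\<Sum>i\<in>S. ys ! (p i))"
  proof (rule sum.cong)
    fix i assume "i \<in> S" then have "i < n" using S(1) by auto
    then show "f i = ys ! (p i)" using p(2) unfolding xs_def by (metis diff_zero length_upt nth_map nth_upt add_0)
  qed simp
  also have "\<dots> = sum ((!) ys) (p ` S)" using injS by (simp add: sum.reindex)
  also have "\<dots> \<le> (\<Sum>j<k. ys ! j)"
  proof (rule top_sum_ge[where N=n])
    fix j j' assume "j \<le> j'" "j' < n"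
    then show "ys ! j' \<le> ys ! j"
      unfolding ys_def using lys by (simp add: rev_nth sorted_nth_mono)
  next
    show "p ` S \<subseteq> {..<n}" using p(1) S(1) bij_betw_imp_surj_on by (metis image_mono)
    show "card (p ` S) = k" using injS S(2) by (simp add: card_image)
  qed
  also have "\<dots> = sum_list (take k ys)"
  proof -
    have k: "k \<le> n" using S card_mono[of "{..<n}" S] by simp
    have "sum_list (take k ys) = (\<Sum>i = 0..<length (take k ys). take k ys ! i)"
      by (rule sum_list_sum_nth)
    also have "\<dots> = (\<Sum>j<k. ys ! j)" using k lys by (simp add: atLeast0LessThan)
    finally show ?thesis by simp
  qed
  finally have "sum f S \<le> sum_list (take k ys)" .
  then show ?thesis unfolding max_k_def im ys_def by (simp only: sorted_list_of_multiset_mset)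
qed


lemma shift_inj:
  assumes "(n::nat) > 0"
  shows "inj_on (\<lambda>j. (j + s) mod n) {..<n}"
proof (rule inj_onI)
  fix j j' assume j: "j \<in> {..<n}" "j' \<in> {..<n}" and e: "(j + s) mod n = (j' + s) mod n"
  have "\<exists>q1 q2. j + s + n*q1 = j' + s + n*q2" using e nat_mod_eq_iff by blast
  then obtain q1 q2 where "j + s + n*q1 = j' + s + n*q2" by blast
  then have "j + n*q1 = j' + n*q2" by simp
  then have "j mod n = j' mod n" using nat_mod_eq_iff by blast
  with j show "j = j'" by simp
qed

lemma shift_bij:
  assumes "(n::nat) > 0"
  shows "bij_betw (\<lambda>j. (j + s) mod n) {..<n} {..<n}"
proof -
  have im: "(\<lambda>j. (j + s) mod n) ` {..<n} \<subseteq> {..<n}" using assms by auto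
  have "(\<lambda>j. (j + s) mod n) ` {..<n} = {..<n}"
    using endo_inj_surj[OF _ im shift_inj[OF assms]] by simp
  then show ?thesis using shift_inj[OF assms] unfolding bij_betw_def by simp
qed

lemma top_set_exists:
  fixes ov :: "nat \<Rightarrow> real"
  assumes "k \<le> n"
  obtains T where "T \<subseteq> {..<n}" "card T = k" "\<And>t i. t \<in> T \<Longrightarrow> i < n \<Longrightarrow> i \<notin> T \<Longrightarrow> ov i \<le> ov t"
proof -
  define SS where "SS = {T. T \<subseteq> {..<n} \<and> card T = k}"
  have fin: "finite SS" unfolding SS_def by (rule finite_subset[of _ "Pow {..<n}"]) auto
  have ne: "{..<k} \<in> SS" using assms unfolding SS_def by auto
  have "Max (sum ov ` SS) \<in> sum ov ` SS" using fin ne by (intro Max_in) auto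
  then obtain T where T: "T \<in> SS" "sum ov T = Max (sum ov ` SS)" by auto
  have mx: "sum ov T' \<le> sum ov T" if "T' \<in> SS" for T'
    using T(2) fin that by simp
  show ?thesis
  proof (rule that)
    show "T \<subseteq> {..<n}" "card T = k" using T(1) unfolding SS_def by auto
    fix t i assume ti: "t \<in> T" "i < n" "i \<notin> T"
    have finT: "finite T" using T(1) unfolding SS_def using finite_subset by blast
    define T' where "T' = insert i (T - {t})"
    have "card T > 0" using ti finT card_gt_0_iff by blast
    then have "card T' = k" unfolding T'_def using ti finT T(1) unfolding SS_def by (simp add: card_Diff_singleton)
    moreover have "T' \<subseteq> {..<n}" unfolding T'_def using ti T(1) unfolding SS_def by auto
    ultimately have "T' \<in> SS" unfolding SS_def by simp
    then have "sum ov T' \<le> sum ov T" by (rule mx)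
    moreover have "sum ov T' = ov i + sum ov (T - {t})" unfolding T'_def using ti finT by simp
    moreover have "sum ov T = ov t + sum ov (T - {t})" using ti finT by (simp add: sum.remove)
    ultimately show "ov i \<le> ov t" by simp
  qed
qed

lemma exchange:
  fixes ov :: "nat \<Rightarrow> real"
  assumes T: "T \<subseteq> {..<n}" and Y: "Y \<subseteq> {..<n}" and c: "card Y \<le> card T"
    and top: "\<And>t i. t \<in> T \<Longrightarrow> i < n \<Longrightarrow> i \<notin> T \<Longrightarrow> ov i \<le> ov t"
  obtains U where "U \<subseteq> T" "card U \<le> card Y" "sum ov Y \<le> sum ov U"
proof -
  have fT: "finite T" and fY: "finite Y" using T Y finite_subset by blast+
  have e1: "card Y = card (Y - T) + card (Y \<inter> T)"
    using fY by (metis card_Diff_subset_Int card_mono inf_le1 le_add_diff_inverse2 finite_Int card_Diff_subset Diff_Int2 Int_absorb)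
  have e2: "card T = card (T - Y) + card (Y \<inter> T)"
    using fT by (metis card_Diff_subset_Int card_mono inf_le2 le_add_diff_inverse2 finite_Int Int_commute)
  have "card (Y - T) \<le> card (T - Y)" using e1 e2 c by simp
  then obtain phi where phi: "phi ` (Y - T) \<subseteq> T - Y" "inj_on phi (Y - T)"
    using card_le_inj[of "Y - T" "T - Y"] fT fY by auto
  define U where "U = (Y \<inter> T) \<union> phi ` (Y - T)"
  show ?thesis
  proof (rule that)
    show "U \<subseteq> T" unfolding U_def using phi by auto
    have "card U \<le> card (Y \<inter> T) + card (phi ` (Y - T))" unfolding U_def by (rule card_Un_le)
    also have "card (phi ` (Y - T)) = card (Y - T)" using phi(2) by (rule card_image)
    finally show "card U \<le> card Y" using e1 by simp
    have "sum ov Y = sum ov (Y \<inter> T) + sum ov (Y - T)" using fY by (metis sum.Int_Diff)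
    also have "sum ov (Y - T) \<le> sum (ov \<circ> phi) (Y - T)"
    proof (rule sum_mono)
      fix y assume "y \<in> Y - T"
      then show "ov y \<le> (ov \<circ> phi) y" using top[of "phi y" y] phi(1) Y by auto
    qed
    also have "sum (ov \<circ> phi) (Y - T) = sum ov (phi ` (Y - T))" using phi(2) by (simp add: sum.reindex)
    also have "sum ov (Y \<inter> T) + sum ov (phi ` (Y - T)) = sum ov U"
      unfolding U_def using phi(1) fY fT by (intro sum.union_disjoint[symmetric]) auto
    finally show "sum ov Y \<le> sum ov U" by simp
  qed
qed

lemma binom_ratio:
  assumes "1 \<le> k" "k \<le> n"
  shows "real ((n - k) choose k) / real (n choose k) \<le> real (n - k) / real n"
proof -
  have pos: "real (n choose k) > 0" using assms by simp
  have n0: "real n > 0" using assms by simp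
  have "(n - k) choose k \<le> (n - 1) choose k" using assms by (intro binomial_right_mono) simp
  then have "real n * real ((n - k) choose k) \<le> real n * real ((n - 1) choose k)"
    by (intro mult_left_mono) auto
  also have "real n * real ((n - 1) choose k) = real (n - k) * real (n choose k)"
    using binomial_absorb_comp[of n k] by (metis of_nat_mult)
  finally show ?thesis using pos n0 by (simp add: divide_simps mult.commute)
qed


lemma pointwise:
  fixes a ov :: "nat \<Rightarrow> real" and H :: "(nat \<Rightarrow> real) \<Rightarrow> real"
  assumes k1: "1 \<le> k" "k \<le> n"
    and T: "T \<subseteq> {..<n}" "card T = k" "\<And>t i. t \<in> T \<Longrightarrow> i < n \<Longrightarrow> i \<notin> T \<Longrightarrow> ov i \<le> ov t"
    and ovn: "\<forall>i<n. ov i \<ge> 0" and an: "\<forall>i<n. a i \<ge> 0"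
    and X: "X \<subseteq> {..<n}" and Y: "Y \<subseteq> {..<n}" and cXY: "card X + card Y \<le> k"
    and H_def: "\<And>b. H b = Max ((\<lambda>S. sum (\<lambda>i. if i \<in> T then ov i else b i) S) ` {S. S \<subseteq> {..<n} \<and> card S = k})"
  shows "real (n - k) * (sum a X + sum ov Y) \<le> (\<Sum>s<n. H (\<lambda>j\<in>{..<n}. a ((j + s) mod n)))"
    and "0 \<le> H (\<lambda>j\<in>{..<n}. a ((j + s) mod n))"
proof -
  have n0: "n > 0" using k1 by simp
  define F where "F i = (if i \<in> X then a i else 0)" for i
  define D where "D = {..<n} - T"
  define SS where "SS = {S. S \<subseteq> {..<n} \<and> card S = k}"
  have finSS: "finite SS" unfolding SS_def by (rule finite_subset[of _ "Pow {..<n}"]) auto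
  have fX: "finite X" and fY: "finite Y" using X Y finite_subset by blast+
  have Fn: "0 \<le> F i" for i using an X unfolding F_def by auto
  have ovY: "0 \<le> sum ov Y" using ovn Y by (intro sum_nonneg) auto
  have cY: "card Y \<le> card T" using T(2) cXY by simp
  have "\<exists>U. U \<subseteq> T \<and> card U \<le> card Y \<and> sum ov Y \<le> sum ov U"
    by (rule exchange[where ov=ov, OF T(1) Y cY T(3)]) auto
  then obtain U where U: "U \<subseteq> T" "card U \<le> card Y" "sum ov Y \<le> sum ov U" by blast
  have fU: "finite U" by (rule finite_subset[OF U(1) finite_subset[OF T(1) finite_lessThan]])
  have per_s: "sum ov Y + (\<Sum>j\<in>D. F ((j + s) mod n)) \<le> H (\<lambda>j\<in>{..<n}. a ((j + s) mod n))" for s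
  proof -
    define b where "b = (\<lambda>j\<in>{..<n}. a ((j + s) mod n))"
    define c where "c j = (if j \<in> T then ov j else b j)" for j
    define W where "W = {j \<in> D. (j + s) mod n \<in> X}"
    have fW: "finite W" unfolding W_def D_def by simp
    have "card W \<le> card X"
    proof (rule card_inj_on_le)
      show "inj_on (\<lambda>j. (j + s) mod n) W"
        using shift_inj[OF n0, of s] unfolding W_def D_def by (rule inj_on_subset) auto
      show "(\<lambda>j. (j + s) mod n) ` W \<subseteq> X" unfolding W_def by auto
      show "finite X" by (rule fX)
    qed
    define Q where "Q = U \<union> W"
    have cQ: "card Q \<le> k"
    proof -
      have "card Q \<le> card U + card W" unfolding Q_def by (rule card_Un_le)
      then show ?thesis using U(2) \<open>card W \<le> card X\<close> cXY by linarith
    qed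
    have Qsub: "Q \<subseteq> {..<n}" unfolding Q_def W_def D_def using U(1) T(1) by auto
    obtain S' where S': "Q \<subseteq> S'" "S' \<subseteq> {..<n}" "card S' = k"
      using exists_subset_between[OF cQ _ Qsub] k1 by auto
    have "S' \<in> SS" using S' unfolding SS_def by simp
    then have "sum c S' \<le> H b" unfolding H_def c_def SS_def[symmetric] using finSS by (intro Max_ge) auto
    moreover have "sum c Q \<le> sum c S'"
    proof (rule sum_mono2)
      show "finite S'" using S'(2) finite_subset by blast
      show "Q \<subseteq> S'" by (rule S'(1))
      fix j assume "j \<in> S' - Q"
      then have "j < n" using S'(2) by auto
      then show "0 \<le> c j" unfolding c_def b_def using ovn an n0 by auto
    qed
    moreover have "sum c Q = sum c U + sum c W"
      unfolding Q_def using fU fW U(1) by (intro sum.union_disjoint) (auto simp: W_def D_def)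
    moreover have "sum c U = sum ov U" using U(1) unfolding c_def by (intro sum.cong) auto
    moreover have "sum c W = (\<Sum>j\<in>D. F ((j + s) mod n))"
    proof -
      have "sum c W = (\<Sum>j\<in>W. a ((j + s) mod n))"
        by (intro sum.cong) (auto simp: c_def b_def W_def D_def)
      also have "\<dots> = (\<Sum>j\<in>D. if (j + s) mod n \<in> X then a ((j + s) mod n) else 0)"
        unfolding W_def by (rule sum.inter_filter) (simp add: D_def)
      finally show ?thesis unfolding F_def .
    qed
    ultimately show ?thesis using U(3) unfolding b_def by linarith
  qed
  show "0 \<le> H (\<lambda>j\<in>{..<n}. a ((j + s) mod n))"
  proof -
    have "0 \<le> (\<Sum>j\<in>D. F ((j + s) mod n))" using Fn by (intro sum_nonneg)
    then show ?thesis using per_s[of s] ovY by linarith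
  qed
  have inner: "(\<Sum>s<n. F ((j + s) mod n)) = sum a X" for j
  proof -
    have "(\<Sum>s<n. F ((j + s) mod n)) = (\<Sum>s<n. F ((s + j) mod n))" by (simp add: add.commute)
    also have "\<dots> = (\<Sum>i<n. F i)" by (rule sum.reindex_bij_betw[OF shift_bij[OF n0]])
    also have "\<dots> = (\<Sum>i\<in>{i\<in>{..<n}. i \<in> X}. a i)" unfolding F_def by (rule sum.inter_filter[symmetric]) simp
    also have "{i\<in>{..<n}. i \<in> X} = X" using X by auto
    finally show ?thesis .
  qed
  have cD: "card D = n - k" unfolding D_def using T(1,2) by (simp add: card_Diff_subset finite_subset)
  have "(\<Sum>s<n. sum ov Y + (\<Sum>j\<in>D. F ((j + s) mod n))) = real n * sum ov Y + (\<Sum>j\<in>D. \<Sum>s<n. F ((j + s) mod n))"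
    by (simp add: sum.distrib) (rule sum.swap)
  also have "\<dots> = real n * sum ov Y + real (n - k) * sum a X" using inner cD by simp
  finally have eq: "(\<Sum>s<n. sum ov Y + (\<Sum>j\<in>D. F ((j + s) mod n))) = real n * sum ov Y + real (n - k) * sum a X" .
  have "real (n - k) * (sum a X + sum ov Y) \<le> real n * sum ov Y + real (n - k) * sum a X"
    using ovY k1 by (simp add: algebra_simps mult_right_mono)
  also have "\<dots> \<le> (\<Sum>s<n. H (\<lambda>j\<in>{..<n}. a ((j + s) mod n)))"
    unfolding eq[symmetric] by (intro sum_mono per_s)
  finally show "real (n - k) * (sum a X + sum ov Y) \<le> (\<Sum>s<n. H (\<lambda>j\<in>{..<n}. a ((j + s) mod n)))" .
qed


theorem theorem3:
  fixes n k :: nat and G :: "real measure" and ov :: "nat \<Rightarrow> real"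
  assumes "2 * k \<le> n"
    and "regular_dist G"
    and "\<forall>i<n. ov i \<ge> 0"
  shows "\<forall>x y. feasible_mech n k G x y \<longrightarrow>
           ennreal (real ((n - k) choose k) / real (n choose k)) * mech_obj n G ov x y
             \<le> gfix_obj n k G ov"
proof (intro allI impI)
  fix x y assume feas: "feasible_mech n k G x y"
  note ovn = assms(3)
  define P where "P = profile_measure n G"
  have P_def': "P = PiM {..<n} (\<lambda>_. G)" unfolding P_def profile_measure_def by simp
  have probG: "prob_space G" using assms(2) unfolding regular_dist_def by blast
  obtain f S0 where f: "f \<in> borel_measurable borel" "G = density lborel (\<lambda>v. ennreal (f v))"
      "S0 \<subseteq> {0..}" "\<forall>v. v \<notin> S0 \<longrightarrow> f v = 0"
    using assms(2) unfolding regular_dist_def by blast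
  have Gspace: "space G = UNIV" using f(2) by simp
  have Gsets: "sets G = sets borel" using f(2) by simp
  have spaceP: "space P = PiE {..<n} (\<lambda>_. UNIV)" unfolding P_def' space_PiM Gspace by simp
  have comp: "(\<lambda>a. a i) \<in> borel_measurable P" if "i < n" for i
  proof -
    have "(\<lambda>a. a i) \<in> measurable P G" unfolding P_def' using that by (intro measurable_component_singleton) simp
    moreover have "measurable P G = borel_measurable P" by (rule measurable_cong_sets[OF refl Gsets])
    ultimately show ?thesis by simp
  qed
  define V where "V a = (\<Sum>i<n. (if x a i then a i else 0) + (if y a i then ov i else 0))" for a :: "nat \<Rightarrow> real"
  have mech: "mech_obj n G ov x y = (\<integral>\<^sup>+ a. ennreal (V a) \<partial>P)"
    unfolding mech_obj_def V_def P_def by simp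
  have feasA: "\<And>a. a \<in> space P \<Longrightarrow> card {i\<in>{..<n}. x a i} + card {i\<in>{..<n}. y a i} \<le> k"
    using feas unfolding feasible_mech_def spaceP by blast
  have feasM: "\<And>i. i < n \<Longrightarrow> {a \<in> space P. x a i} \<in> sets P \<and> {a \<in> space P. y a i} \<in> sets P"
    using feas unfolding feasible_mech_def P_def by blast
  have Vm: "V \<in> borel_measurable P"
    unfolding V_def
  proof (intro borel_measurable_sum borel_measurable_add)
    fix i assume "i \<in> {..<n}"
    then have i: "i < n" by simp
    show "(\<lambda>a. if x a i then a i else 0) \<in> borel_measurable P"
      using feasM[OF i] comp[OF i] by (intro measurable_If) auto
    show "(\<lambda>a. if y a i then ov i else 0) \<in> borel_measurable P"
      using feasM[OF i] by (intro measurable_If) auto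
  qed
  have Vem: "(\<lambda>a. ennreal (V a)) \<in> borel_measurable P" using Vm by simp
  show "ennreal (real ((n - k) choose k) / real (n choose k)) * mech_obj n G ov x y \<le> gfix_obj n k G ov"
  proof (cases "k = 0")
    case True
    have "V a = 0" if "a \<in> space P" for a
    proof -
      have "card {i\<in>{..<n}. x a i} = 0" "card {i\<in>{..<n}. y a i} = 0" using feasA[OF that] True by auto
      then have "{i\<in>{..<n}. x a i} = {}" "{i\<in>{..<n}. y a i} = {}" by auto
      then show ?thesis unfolding V_def by (intro sum.neutral) auto
    qed
    then have "mech_obj n G ov x y = 0" unfolding mech by (simp add: nn_integral_cong)
    then show ?thesis by simp
  next
    case False
    then have k1: "1 \<le> k" by simp
    have kn: "k \<le> n" using assms(1) by simp
    have n0: "n > 0" using k1 kn by simp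
    obtain T where T: "T \<subseteq> {..<n}" "card T = k" "\<And>t i. t \<in> T \<Longrightarrow> i < n \<Longrightarrow> i \<notin> T \<Longrightarrow> ov i \<le> ov t"
      using top_set_exists[OF kn] by metis
    define SS where "SS = {S. S \<subseteq> {..<n} \<and> card S = k}"
    have finSS: "finite SS" unfolding SS_def by (rule finite_subset[of _ "Pow {..<n}"]) auto
    have neSS: "SS \<noteq> {}" using T unfolding SS_def by auto
    define H where "H b = Max ((\<lambda>S. sum (\<lambda>i. if i \<in> T then ov i else b i) S) ` SS)" for b :: "nat \<Rightarrow> real"
    have H_def': "\<And>b. H b = Max ((\<lambda>S. sum (\<lambda>i. if i \<in> T then ov i else b i) S) ` {S. S \<subseteq> {..<n} \<and> card S = k})"
      unfolding H_def SS_def by simp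
    have Hm: "H \<in> borel_measurable P"
    proof -
      have "(\<lambda>b. Max ((\<lambda>S. sum (\<lambda>i. if i \<in> T then ov i else b i) S) ` SS)) \<in> borel_measurable P"
      proof (rule borel_measurable_Max[OF finSS])
        fix S assume "S \<in> SS"
        then have S: "S \<subseteq> {..<n}" unfolding SS_def by simp
        show "(\<lambda>b. \<Sum>i\<in>S. if i \<in> T then ov i else b i) \<in> borel_measurable P"
        proof (rule borel_measurable_sum)
          fix i assume "i \<in> S"
          then have "i < n" using S by auto
          then show "(\<lambda>b. if i \<in> T then ov i else b i) \<in> borel_measurable P"
            using comp by (cases "i \<in> T") auto
        qed
      qed
      then show ?thesis unfolding H_def[abs_def] by simp
    qed
    define rho where "rho s a = (\<lambda>j\<in>{..<n}. a ((j + s) mod n))" for s and a :: "nat \<Rightarrow> real"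
    have rhom: "rho s \<in> measurable P P" for s
    proof -
      have "(\<lambda>a. \<lambda>j\<in>{..<n}. a ((j + s) mod n)) \<in> measurable P (PiM {..<n} (\<lambda>_. G))"
      proof (rule measurable_restrict)
        fix j assume "j \<in> {..<n}"
        then have "(j + s) mod n \<in> {..<n}" using n0 by simp
        then show "(\<lambda>a. a ((j + s) mod n)) \<in> measurable P G"
          unfolding P_def' by (rule measurable_component_singleton)
      qed
      then show ?thesis unfolding rho_def[abs_def] P_def'[symmetric] by simp
    qed
    have distr_eq: "distr P P (rho s) = P" for s
    proof -
      have "distr (PiM {..<n} (\<lambda>_. G)) (PiM {..<n} (\<lambda>i. (\<lambda>_. G) ((i + s) mod n))) (\<lambda>\<omega>. \<lambda>j\<in>{..<n}. \<omega> ((j + s) mod n))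
            = PiM {..<n} (\<lambda>i. (\<lambda>_. G) ((i + s) mod n))"
        using probG shift_inj[OF n0, of s] n0 by (intro distr_PiM_reindex) auto
      then show ?thesis unfolding rho_def[abs_def] P_def' by simp
    qed
    have int_rho: "(\<integral>\<^sup>+ a. ennreal (H (rho s a)) \<partial>P) = (\<integral>\<^sup>+ a. ennreal (H a) \<partial>P)" for s
    proof -
      have "(\<integral>\<^sup>+ a. ennreal (H a) \<partial>P) = (\<integral>\<^sup>+ a. ennreal (H a) \<partial>distr P P (rho s))" by (simp add: distr_eq)
      also have "\<dots> = (\<integral>\<^sup>+ a. ennreal (H (rho s a)) \<partial>P)"
        using rhom Hm by (intro nn_integral_distr) auto
      finally show ?thesis by simp
    qed
    have AEnn: "AE a in P. \<forall>i\<in>{..<n}. 0 \<le> a i"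
    proof (rule eventually_ball_finite)
      show "finite {..<n}" by simp
      have AEG: "AE v in G. 0 \<le> v"
      proof -
        have fm: "(\<lambda>v. ennreal (f v)) \<in> borel_measurable lborel" using f(1) by simp
        have "AE v in lborel. 0 < ennreal (f v) \<longrightarrow> 0 \<le> v"
        proof (rule AE_I2, rule impI)
          fix v assume "0 < ennreal (f v)"
          then have "f v \<noteq> 0" by auto
          then have "v \<in> S0" using f(4) by blast
          then show "0 \<le> v" using f(3) by auto
        qed
        then show ?thesis unfolding f(2) using AE_density[OF fm] by simp
      qed
      show "\<forall>i\<in>{..<n}. AE a in P. 0 \<le> a i"
        unfolding P_def' using probG AEG by (auto intro!: AE_PiM_component)
    qed
    have pw: "AE a in P. ennreal (real (n - k)) * ennreal (V a) \<le> (\<Sum>s<n. ennreal (H (rho s a)))"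
      using AEnn
    proof (rule AE_mp)
      show "AE a in P. (\<forall>i\<in>{..<n}. 0 \<le> a i) \<longrightarrow> ennreal (real (n - k)) * ennreal (V a) \<le> (\<Sum>s<n. ennreal (H (rho s a)))"
      proof (rule AE_I2, rule impI)
        fix a assume a: "a \<in> space P" and an': "\<forall>i\<in>{..<n}. 0 \<le> a i"
        have an: "\<forall>i<n. 0 \<le> a i" using an' by simp
        define X where "X = {i\<in>{..<n}. x a i}"
        define Y where "Y = {i\<in>{..<n}. y a i}"
        have cXY: "card X + card Y \<le> k" unfolding X_def Y_def by (rule feasA[OF a])
        have VXY: "V a = sum a X + sum ov Y"
        proof -
          have "V a = (\<Sum>i<n. if x a i then a i else 0) + (\<Sum>i<n. if y a i then ov i else 0)"
            unfolding V_def by (rule sum.distrib)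
          also have "(\<Sum>i<n. if x a i then a i else 0) = sum a X"
            unfolding X_def by (rule sum.inter_filter[symmetric]) simp
          also have "(\<Sum>i<n. if y a i then ov i else 0) = sum ov Y"
            unfolding Y_def by (rule sum.inter_filter[symmetric]) simp
          finally show ?thesis .
        qed
        have XY: "X \<subseteq> {..<n}" "Y \<subseteq> {..<n}" unfolding X_def Y_def by auto
        note pt = pointwise[OF k1 kn T ovn an XY cXY H_def']
        have V0: "0 \<le> V a" unfolding VXY using an ovn XY by (intro add_nonneg_nonneg sum_nonneg) auto
        have H0: "0 \<le> H (rho s a)" for s unfolding rho_def by (rule pt(2))
        have "ennreal (real (n - k)) * ennreal (V a) = ennreal (real (n - k) * V a)"
          using V0 by (simp add: ennreal_mult)
        also have "\<dots> \<le> ennreal (\<Sum>s<n. H (rho s a))"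
        proof (rule ennreal_leI)
          show "real (n - k) * V a \<le> (\<Sum>s<n. H (rho s a))" unfolding VXY rho_def by (rule pt(1))
        qed
        also have "\<dots> = (\<Sum>s<n. ennreal (H (rho s a)))" using H0 by simp
        finally show "ennreal (real (n - k)) * ennreal (V a) \<le> (\<Sum>s<n. ennreal (H (rho s a)))" .
      qed
    qed
    have key: "ennreal (real (n - k)) * mech_obj n G ov x y \<le> ennreal (real n) * (\<integral>\<^sup>+ a. ennreal (H a) \<partial>P)"
    proof -
      have "ennreal (real (n - k)) * mech_obj n G ov x y = (\<integral>\<^sup>+ a. ennreal (real (n - k)) * ennreal (V a) \<partial>P)"
        unfolding mech using Vem by (rule nn_integral_cmult[symmetric])
      also have "\<dots> \<le> (\<integral>\<^sup>+ a. (\<Sum>s<n. ennreal (H (rho s a))) \<partial>P)"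
        using pw by (rule nn_integral_mono_AE)
      also have "\<dots> = (\<Sum>s<n. \<integral>\<^sup>+ a. ennreal (H (rho s a)) \<partial>P)"
      proof (rule nn_integral_sum)
        fix s
        show "(\<lambda>a. ennreal (H (rho s a))) \<in> borel_measurable P"
          using measurable_comp[OF rhom Hm] by (simp add: comp_def)
      qed
      also have "\<dots> = (\<Sum>s<n. \<integral>\<^sup>+ a. ennreal (H a) \<partial>P)" using int_rho by simp
      also have "\<dots> = ennreal (real n) * (\<integral>\<^sup>+ a. ennreal (H a) \<partial>P)"
        by (simp add: ennreal_of_nat_eq_real_of_nat)
      finally show ?thesis .
    qed
    have H_le: "(\<integral>\<^sup>+ a. ennreal (H a) \<partial>P) \<le> fix_obj n k G ov T"
      unfolding fix_obj_def P_def[symmetric]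
    proof (rule nn_integral_mono, rule ennreal_leI)
      fix b :: "nat \<Rightarrow> real"
      show "H b \<le> max_k k (image_mset (\<lambda>i. if i \<in> T then ov i else b i) (mset_set {..<n}))"
        unfolding H_def using finSS neSS
        by (subst Max_le_iff) (auto simp: SS_def intro: max_k_ge)
    qed
    have fix_le: "fix_obj n k G ov T \<le> gfix_obj n k G ov"
    proof -
      have "finite {I. I \<subseteq> {..<n} \<and> card I \<le> k}" by (rule finite_subset[of _ "Pow {..<n}"]) auto
      moreover have "T \<in> {I. I \<subseteq> {..<n} \<and> card I \<le> k}" using T by simp
      ultimately show ?thesis unfolding gfix_obj_def by (intro Max_ge) auto
    qed
    have R: "ennreal (real ((n - k) choose k) / real (n choose k)) \<le> ennreal (1 / real n) * ennreal (real (n - k))"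
    proof -
      have "ennreal (1 / real n) * ennreal (real (n - k)) = ennreal (real (n - k) / real n)"
        by (simp add: ennreal_mult[symmetric])
      then show ?thesis using binom_ratio[OF k1 kn] by (simp add: ennreal_leI)
    qed
    have "ennreal (real ((n - k) choose k) / real (n choose k)) * mech_obj n G ov x y
        \<le> ennreal (1 / real n) * ennreal (real (n - k)) * mech_obj n G ov x y"
      using R by (rule mult_right_mono) simp
    also have "\<dots> = ennreal (1 / real n) * (ennreal (real (n - k)) * mech_obj n G ov x y)" by (simp add: mult.assoc)
    also have "\<dots> \<le> ennreal (1 / real n) * (ennreal (real n) * (\<integral>\<^sup>+ a. ennreal (H a) \<partial>P))"
      using key by (rule mult_left_mono) simp
    also have "\<dots> = (\<integral>\<^sup>+ a. ennreal (H a) \<partial>P)"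
    proof -
      have "ennreal (1 / real n) * ennreal (real n) = 1" using n0 by (simp add: ennreal_mult[symmetric])
      then show ?thesis by (simp add: mult.assoc[symmetric])
    qed
    also have "\<dots> \<le> gfix_obj n k G ov" using H_le fix_le by (rule order_trans)
    finally show ?thesis .
  qed
qed

end
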